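(* Let $F$ and $G$ be simple graphs. Then \[\hom(F,G^\circ)=\sum_{L\subseteq E(F)}\hom(F\oslash L,G).\]
   Context: Graphs are finite, undirected, without multiple edges, possibly with loops; simple means without loops. A homomorphism $F\to G$ is a vertex map sending edges to edges and looped vertices to looped vertices (so an edge may be mapped onto a loop); $\hom(F,G)$ counts them. $G^\circ$ is obtained from $G$ by adding a loop at every vertex. For a simple graph $F$ and $L\subseteq E(F)$, $v\sim_L w$ iff $v,w$ lie in the same connected component of the graph $(V(F),L)$; $[v]_L$ denotes the class of $v$. The contraction quotient $F\oslash L$ is the graph (possibly with loops) whose vertices are the classes $[v]_L$, with an edge (or loop, if the classes coincide) between $[v]_L$ and $[w]_L$ iff there is an edge $xy\in E(F)\setminus L$ with $x\sim_L v$ and $y\sim_L w$. *)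

theory Defs
  imports Main "HOL-Library.FuncSet"
begin

text \<open>A graph (possibly with loops, no multiple edges) is a pair (V, E) of a vertex set
and a set of edges; an edge is a 2-element subset of V, a loop at v is the singleton {v}.\<close>

type_synonym 'a graph = "'a set \<times> 'a set set"

definition verts :: "'a graph \<Rightarrow> 'a set" where "verts G = fst G"
definition edges :: "'a graph \<Rightarrow> 'a set set" where "edges G = snd G"

definition graph :: "'a graph \<Rightarrow> bool" where
  "graph G \<longleftrightarrow> finite (verts G) \<and>
     (\<forall>e\<in>edges G. e \<subseteq> verts G \<and> (card e = 1 \<or> card e = 2))"

definition simple_graph :: "'a graph \<Rightarrow> bool" where
  "simple_graph G \<longleftrightarrow> graph G \<and> (\<forall>e\<in>edges G. card e = 2)"

text \<open>Homomorphisms F -> G: vertex maps (extensional on V(F)) sending every edge/loop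
of F to an edge or loop of G. An edge {x,y} with f x = f y is sent to the loop {f x}.\<close>

definition homs :: "'a graph \<Rightarrow> 'b graph \<Rightarrow> ('a \<Rightarrow> 'b) set" where
  "homs F G = {f \<in> verts F \<rightarrow>\<^sub>E verts G. \<forall>e\<in>edges F. f ` e \<in> edges G}"

definition hom_count :: "'a graph \<Rightarrow> 'b graph \<Rightarrow> nat" where
  "hom_count F G = card (homs F G)"

definition add_loops :: "'a graph \<Rightarrow> 'a graph" where
  "add_loops G = (verts G, edges G \<union> {{v} | v. v \<in> verts G})"

definition class_of :: "'a graph \<Rightarrow> 'a set set \<Rightarrow> 'a \<Rightarrow> 'a set" where
  "class_of F L v = {w \<in> verts F. (\<lambda>x y. {x, y} \<in> L)\<^sup>*\<^sup>* v w}"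

definition contract :: "'a graph \<Rightarrow> 'a set set \<Rightarrow> 'a set graph" where
  "contract F L = (class_of F L ` verts F,
     {{class_of F L x, class_of F L y} | x y. {x, y} \<in> edges F - L})"

end

theory Submission
  imports Defs
begin

definition mono_edges :: "'a graph \<Rightarrow> ('a \<Rightarrow> 'b) \<Rightarrow> 'a set set" where
  "mono_edges F f = {e \<in> edges F. card (f ` e) = 1}"

lemma simple_edge:
  assumes "simple_graph F" "e \<in> edges F"
  shows "\<exists>x y. e = {x,y} \<and> x \<noteq> y \<and> x \<in> verts F \<and> y \<in> verts F"
proof -
  have "card e = 2" "e \<subseteq> verts F" using assms unfolding simple_graph_def graph_def by auto
  then show ?thesis by (auto simp: card_2_iff)
qed

lemma class_eq:
  assumes "{x,y} \<in> L"
  shows "class_of F L x = class_of F L y"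
proof -
  let ?R = "\<lambda>x y. {x, y} \<in> L"
  have r1: "?R x y" and r2: "?R y x" using assms by (auto simp: insert_commute)
  have "?R\<^sup>*\<^sup>* x w \<longleftrightarrow> ?R\<^sup>*\<^sup>* y w" for w
    using converse_rtranclp_into_rtranclp[of ?R x y w, OF r1]
          converse_rtranclp_into_rtranclp[of ?R y x w, OF r2] by blast
  then show ?thesis unfolding class_of_def by auto
qed

lemma class_self: "v \<in> verts F \<Longrightarrow> v \<in> class_of F L v"
  unfolding class_of_def by auto

lemma const_on_class:
  assumes "\<And>x y. {x,y} \<in> L \<Longrightarrow> f x = f y" "w \<in> class_of F L v"
  shows "f w = f v"
proof -
  have "(\<lambda>x y. {x, y} \<in> L)\<^sup>*\<^sup>* v w" using assms(2) unfolding class_of_def by auto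
  then have "f v = f w"
    by (induction rule: rtranclp_induct) (auto dest: assms(1))
  then show ?thesis by simp
qed

lemma simple_card2: "simple_graph G \<Longrightarrow> e \<in> edges G \<Longrightarrow> card e = 2"
  unfolding simple_graph_def by auto

lemma fiber:
  assumes F: "simple_graph F" and G: "simple_graph G" and L: "L \<subseteq> edges F"
  shows "card (homs (contract F L) G) = card {f \<in> homs F (add_loops G). mono_edges F f = L}"
proof -
  define c where "c = class_of F L"
  define V where "V = verts F"
  define \<phi> :: "('a set \<Rightarrow> 'b) \<Rightarrow> 'a \<Rightarrow> 'b" where "\<phi> = (\<lambda>g. restrict (g \<circ> c) V)"
  have vc: "verts (contract F L) = c ` V" unfolding contract_def verts_def c_def V_def by simp
  have ec: "edges (contract F L) = {{c x, c y} | x y. {x, y} \<in> edges F - L}"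
    unfolding contract_def edges_def c_def by simp
  have eG: "edges (add_loops G) = edges G \<union> {{v} | v. v \<in> verts G}" "verts (add_loops G) = verts G"
    unfolding add_loops_def edges_def verts_def by auto
  have inj: "inj_on \<phi> (homs (contract F L) G)"
  proof (rule inj_onI)
    fix g1 g2 assume g1: "g1 \<in> homs (contract F L) G" and g2: "g2 \<in> homs (contract F L) G"
      and eq: "\<phi> g1 = \<phi> g2"
    show "g1 = g2"
    proof
      fix C
      show "g1 C = g2 C"
      proof (cases "C \<in> c ` V")
        case True
        then obtain v where "v \<in> V" "C = c v" by auto
        then show ?thesis using fun_cong[OF eq, of v] unfolding \<phi>_def by auto
      next
        case False
        then show ?thesis using g1 g2 unfolding homs_def vc by (auto simp: PiE_def extensional_def)
      qed
    qed
  qed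
  have img: "\<phi> ` homs (contract F L) G = {f \<in> homs F (add_loops G). mono_edges F f = L}"
  proof (intro equalityI subsetI)
    fix f assume "f \<in> \<phi> ` homs (contract F L) G"
    then obtain g where g: "g \<in> homs (contract F L) G" and f: "f = \<phi> g" by auto
    have gV: "g \<in> c ` V \<rightarrow>\<^sub>E verts G" and gE: "\<And>e. e \<in> edges (contract F L) \<Longrightarrow> g ` e \<in> edges G"
      using g unfolding homs_def vc by auto
    have fPi: "f \<in> V \<rightarrow>\<^sub>E verts G" using gV unfolding f \<phi>_def by auto
    have edge: "f ` e \<in> edges (add_loops G) \<and> (e \<in> L \<longleftrightarrow> card (f ` e) = 1)" if e: "e \<in> edges F" for e
    proof -
      obtain x y where xy: "e = {x,y}" "x \<noteq> y" "x \<in> V" "y \<in> V" using simple_edge[OF F e] V_def by auto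
      have fe: "f ` e = {g (c x), g (c y)}" using xy unfolding f \<phi>_def by auto
      show ?thesis
      proof (cases "e \<in> L")
        case True
        then have "c x = c y" using class_eq xy c_def by metis
        moreover have "g (c x) \<in> verts G" using gV xy by auto
        ultimately show ?thesis using fe True eG by auto
      next
        case False
        then have "{c x, c y} \<in> edges (contract F L)" using ec xy e by auto
        then have ge: "g ` {c x, c y} \<in> edges G" by (rule gE)
        then have "card (g ` {c x, c y}) = 2" using simple_card2[OF G] by auto
        then have "g (c x) \<noteq> g (c y)" by (auto split: if_splits)
        then show ?thesis using fe False ge eG by auto
      qed
    qed
    show "f \<in> {f \<in> homs F (add_loops G). mono_edges F f = L}"
      using fPi edge L unfolding homs_def mono_edges_def eG(2) V_def by auto
  next
    fix f assume "f \<in> {f \<in> homs F (add_loops G). mono_edges F f = L}"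
    then have fV: "f \<in> V \<rightarrow>\<^sub>E verts G" and fE: "\<And>e. e \<in> edges F \<Longrightarrow> f ` e \<in> edges (add_loops G)"
      and mono: "mono_edges F f = L"
      unfolding homs_def V_def eG(2) by auto
    have Lc: "f x = f y" if "{x,y} \<in> L" for x y
    proof -
      have "card (f ` {x,y}) = 1" using that mono unfolding mono_edges_def by auto
      moreover have "f x \<noteq> f y \<Longrightarrow> card (f ` {x,y}) = 2" by simp
      ultimately show ?thesis by linarith
    qed
    have cc: "f v = f w" if "v \<in> V" "w \<in> V" "c v = c w" for v w
    proof -
      have "v \<in> c w" using that class_self[of v F L] unfolding c_def V_def by metis
      then show ?thesis using const_on_class[of L f v F w] Lc unfolding c_def by blast
    qed
    define g where "g = restrict (\<lambda>C. f (SOME v. v \<in> V \<and> c v = C)) (c ` V)"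
    have gc: "g (c v) = f v" if "v \<in> V" for v
    proof -
      have "\<exists>w. w \<in> V \<and> c w = c v" using that by auto
      then have "(SOME w. w \<in> V \<and> c w = c v) \<in> V \<and> c (SOME w. w \<in> V \<and> c w = c v) = c v"
        by (rule someI_ex)
      then have "f (SOME w. w \<in> V \<and> c w = c v) = f v" using cc that by blast
      moreover have "g (c v) = f (SOME w. w \<in> V \<and> c w = c v)" unfolding g_def using that by simp
      ultimately show ?thesis by simp
    qed
    have gx: "g \<in> extensional (c ` V)" unfolding g_def by simp
    have gv: "\<forall>C\<in>c ` V. g C \<in> verts G" using gc fV by auto
    have gV: "g \<in> c ` V \<rightarrow>\<^sub>E verts G"
      using gx gv by (simp add: PiE_iff)
    have gE: "g ` e \<in> edges G" if e: "e \<in> edges (contract F L)" for e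
    proof -
      obtain x y where xy: "e = {c x, c y}" "{x,y} \<in> edges F - L" using e ec by auto
      obtain x' y' where "{x,y} = {x',y'}" "x' \<in> V" "y' \<in> V" using simple_edge[OF F, of "{x,y}"] xy V_def by auto
      then have xyV: "x \<in> V" "y \<in> V" by (auto simp: doubleton_eq_iff)
      have ge: "g ` e = f ` {x,y}" using xy xyV gc by auto
      have "card (f ` {x,y}) \<noteq> 1" using xy mono unfolding mono_edges_def by auto
      moreover have "f ` {x,y} \<in> edges (add_loops G)" using xy by (intro fE) auto
      ultimately show ?thesis using ge eG by auto
    qed
    have "g \<in> homs (contract F L) G" using gV gE unfolding homs_def vc by auto
    moreover have "\<phi> g = f"
    proof
      fix v show "\<phi> g v = f v"
        using gc fV unfolding \<phi>_def by (cases "v \<in> V") (auto simp: PiE_def extensional_def)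
    qed
    ultimately show "f \<in> \<phi> ` homs (contract F L) G" by blast
  qed
  show ?thesis using card_image[OF inj] img by simp
qed

theorem theorem10:
  fixes F :: "'a graph" and G :: "'b graph"
  assumes "simple_graph F" and "simple_graph G"
  shows "hom_count F (add_loops G) = (\<Sum>L\<in>Pow (edges F). hom_count (contract F L) G)"
proof -
  let ?H = "homs F (add_loops G)"
  let ?A = "\<lambda>L. {f \<in> ?H. mono_edges F f = L}"
  have finE: "finite (edges F)"
  proof -
    have "edges F \<subseteq> Pow (verts F)" "finite (verts F)"
      using assms(1) unfolding simple_graph_def graph_def by auto
    then show ?thesis by (meson finite_Pow_iff finite_subset)
  qed
  have finH: "finite ?H"
  proof -
    have "?H \<subseteq> verts F \<rightarrow>\<^sub>E verts G" unfolding homs_def add_loops_def verts_def by auto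
    moreover have "finite (verts F \<rightarrow>\<^sub>E verts G)"
      using assms unfolding simple_graph_def graph_def by (intro finite_PiE) auto
    ultimately show ?thesis by (rule finite_subset)
  qed
  have "?H = (\<Union>L\<in>Pow (edges F). ?A L)" unfolding mono_edges_def by auto
  moreover have "card (\<Union>L\<in>Pow (edges F). ?A L) = (\<Sum>L\<in>Pow (edges F). card (?A L))"
  proof (rule card_UN_disjoint)
    show "finite (Pow (edges F))" using finE by simp
    show "\<forall>i\<in>Pow (edges F). finite (?A i)" using finH by simp
    show "\<forall>i\<in>Pow (edges F). \<forall>j\<in>Pow (edges F). i \<noteq> j \<longrightarrow> ?A i \<inter> ?A j = {}" by blast
  qed
  ultimately have "card ?H = (\<Sum>L\<in>Pow (edges F). card (?A L))" by simp
  also have "\<dots> = (\<Sum>L\<in>Pow (edges F). hom_count (contract F L) G)"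
    unfolding hom_count_def using fiber[OF assms] by (intro sum.cong) auto
  finally show ?thesis unfolding hom_count_def .
qed

end
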